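(* For every finite tree $T$, the closed neighborhood ideal $NI(T)$ is normally torsion-free.
   Context: For a simple graph $G$ and a vertex $i$, the closed neighborhood is $N_G[i]=\{j : \{i,j\}\in E(G)\}\cup\{i\}$. With a variable $x_j$ for each vertex $j$ in the polynomial ring over a field $K$, the closed neighborhood ideal of $G$ is $NI(G)=(\prod_{j\in N_G[i]}x_j : i\in V(G))$. An ideal $I$ is normally torsion-free if $\mathrm{Ass}(R/I^k)\subseteq\mathrm{Ass}(R/I)$ for all $k\geq1$. *)

theory Defs
  imports "HOL-Library.Poly_Mapping"
begin

definition is_ideal :: "'a::comm_ring_1 set \<Rightarrow> bool" where
  "is_ideal I \<longleftrightarrow> 0 \<in> I \<and> (\<forall>a\<in>I. \<forall>b\<in>I. a + b \<in> I) \<and> (\<forall>r. \<forall>a\<in>I. r * a \<in> I)"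

definition ideal_gen :: "'a::comm_ring_1 set \<Rightarrow> 'a set" where
  "ideal_gen S = \<Inter>{I. is_ideal I \<and> S \<subseteq> I}"

definition ideal_pow :: "'a::comm_ring_1 set \<Rightarrow> nat \<Rightarrow> 'a set" where
  "ideal_pow I k = ideal_gen {prod_list xs | xs. length xs = k \<and> set xs \<subseteq> I}"

definition prime_ideal :: "'a::comm_ring_1 set \<Rightarrow> bool" where
  "prime_ideal P \<longleftrightarrow> is_ideal P \<and> 1 \<notin> P \<and> (\<forall>a b. a * b \<in> P \<longrightarrow> a \<in> P \<or> b \<in> P)"

definition ideal_colon :: "'a::comm_ring_1 set \<Rightarrow> 'a \<Rightarrow> 'a set" where
  "ideal_colon I f = {g. g * f \<in> I}"

text \<open>Ass(R/I): primes that are annihilators of an element f + I of R/I, i.e. P = (I : f).\<close>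
definition Ass :: "'a::comm_ring_1 set \<Rightarrow> 'a set set" where
  "Ass I = {P. prime_ideal P \<and> (\<exists>f. P = ideal_colon I f)}"

definition normally_torsion_free :: "'a::comm_ring_1 set \<Rightarrow> bool" where
  "normally_torsion_free I \<longleftrightarrow> (\<forall>k\<ge>1. Ass (ideal_pow I k) \<subseteq> Ass I)"

type_synonym ('v, 'k) mpoly = "('v \<Rightarrow>\<^sub>0 nat) \<Rightarrow>\<^sub>0 'k"

definition var :: "'v \<Rightarrow> ('v, 'k::field) mpoly" where
  "var j = Poly_Mapping.single (Poly_Mapping.single j 1) 1"

section \<open>Finite simple graphs on a finite vertex type (V = UNIV)\<close>

definition simple_graph :: "'v set set \<Rightarrow> bool" where
  "simple_graph E \<longleftrightarrow> (\<forall>e\<in>E. \<exists>a b. a \<noteq> b \<and> e = {a, b})"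

definition adj :: "'v set set \<Rightarrow> 'v \<Rightarrow> 'v \<Rightarrow> bool" where
  "adj E a b \<longleftrightarrow> {a, b} \<in> E \<and> a \<noteq> b"

definition connected_graph :: "'v set set \<Rightarrow> bool" where
  "connected_graph E \<longleftrightarrow> (\<forall>a b. (adj E)\<^sup>*\<^sup>* a b)"

definition is_cycle :: "'v set set \<Rightarrow> 'v list \<Rightarrow> bool" where
  "is_cycle E vs \<longleftrightarrow> length vs \<ge> 3 \<and> distinct vs \<and>
     (\<forall>i. Suc i < length vs \<longrightarrow> adj E (vs ! i) (vs ! Suc i)) \<and> adj E (last vs) (hd vs)"

definition is_tree :: "'v set set \<Rightarrow> bool" where
  "is_tree E \<longleftrightarrow> simple_graph E \<and> connected_graph E \<and> (\<nexists>vs. is_cycle E vs)"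

definition closed_nbhd :: "'v set set \<Rightarrow> 'v \<Rightarrow> 'v set" where
  "closed_nbhd E i = {j. {i, j} \<in> E} \<union> {i}"

definition closed_nbhd_ideal :: "'v set set \<Rightarrow> ('v, 'k::field) mpoly set" where
  "closed_nbhd_ideal E = ideal_gen {\<Prod>j\<in>closed_nbhd E i. var j | i. True}"

end

theory Submission
  imports Defs
begin

abbreviation lk where "lk \<equiv> Poly_Mapping.lookup"
abbreviation ks where "ks \<equiv> Poly_Mapping.keys"

definition dvdm :: "('v \<Rightarrow>\<^sub>0 nat) \<Rightarrow> ('v \<Rightarrow>\<^sub>0 nat) \<Rightarrow> bool" where
  "dvdm a m \<longleftrightarrow> (\<forall>v. lk a v \<le> lk m v)"

definition mon :: "('v \<Rightarrow>\<^sub>0 nat) \<Rightarrow> ('v, 'k::field) mpoly" where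
  "mon a = Poly_Mapping.single a 1"

definition mon_ideal :: "('v \<Rightarrow>\<^sub>0 nat) set \<Rightarrow> ('v, 'k::field) mpoly set" where
  "mon_ideal S = {f. \<forall>m\<in>ks f. \<exists>s\<in>S. dvdm s m}"

lemma lookup_mult_pairs:
  "lk (f * g) q = (\<Sum>(a, b). lk f a * lk g b when q = a + b)"
  by transfer (rule prod_fun_unfold_prod)

lemma keys_diff_sub: "ks (f - g) \<subseteq> ks f \<union> ks g"
  by (auto simp: in_keys_iff lookup_minus)

lemma keys_uminus: "ks (- f) = ks f"
  by (auto simp: in_keys_iff)

lemma poly_expand:
  fixes f :: "'a \<Rightarrow>\<^sub>0 'b::comm_monoid_add"
  shows "f = (\<Sum>m\<in>ks f. Poly_Mapping.single m (lk f m))"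
proof (rule poly_mapping_eqI)
  fix q
  have "lk (\<Sum>m\<in>ks f. Poly_Mapping.single m (lk f m)) q = (\<Sum>m\<in>ks f. (lk f m when m = q))"
    by (simp add: lookup_sum lookup_single)
  also have "\<dots> = lk f q"
    by (cases "q \<in> ks f") (auto simp: when_def in_keys_iff)
  finally show "lk f q = lk (\<Sum>m\<in>ks f. Poly_Mapping.single m (lk f m)) q" by simp
qed

lemma ideal_sum:
  assumes "is_ideal J" "finite A" "\<And>x. x \<in> A \<Longrightarrow> h x \<in> J"
  shows "sum h A \<in> J"
  using assms(2,3)
proof (induction A rule: finite_induct)
  case empty then show ?case using assms(1) by (simp add: is_ideal_def)
next
  case (insert x F) then show ?case using assms(1) by (simp add: is_ideal_def)
qed

lemma ideal_mult: "is_ideal J \<Longrightarrow> a \<in> J \<Longrightarrow> r * a \<in> J"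
  by (simp add: is_ideal_def)

lemma ideal_mult2: "is_ideal J \<Longrightarrow> a \<in> J \<Longrightarrow> a * r \<in> J"
  by (metis ideal_mult mult.commute)

lemma ideal_gen_sub: "is_ideal J \<Longrightarrow> X \<subseteq> J \<Longrightarrow> ideal_gen X \<subseteq> J"
  by (auto simp: ideal_gen_def)

lemma ideal_gen_ideal: "is_ideal (ideal_gen X)"
  unfolding is_ideal_def ideal_gen_def by auto

lemma ideal_gen_super: "X \<subseteq> ideal_gen X"
  unfolding ideal_gen_def by auto

lemma mon_mult: "mon a * mon b = (mon (a + b) :: ('v, 'k::field) mpoly)"
  by (simp add: mon_def mult_single)

lemma keys_mon [simp]: "ks (mon a :: ('v, 'k::field) mpoly) = {a}"
  by (simp add: mon_def)

lemma dvdm_add: "dvdm s b \<Longrightarrow> dvdm s (a + b)"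
  by (auto simp: dvdm_def lookup_add intro: trans_le_add2)

lemma dvdm_add2: "dvdm s a \<Longrightarrow> dvdm t b \<Longrightarrow> dvdm (s + t) (a + b)"
  by (auto simp: dvdm_def lookup_add intro: add_mono)

lemma mon_ideal_ideal: "is_ideal (mon_ideal S)"
  unfolding is_ideal_def mon_ideal_def
proof (intro conjI ballI allI)
  show "(0::('a,'b) mpoly) \<in> {f. \<forall>m\<in>ks f. \<exists>s\<in>S. dvdm s m}" by simp
next
  fix a b :: "('a,'b) mpoly"
  assume "a \<in> {f. \<forall>m\<in>ks f. \<exists>s\<in>S. dvdm s m}" "b \<in> {f. \<forall>m\<in>ks f. \<exists>s\<in>S. dvdm s m}"
  then show "a + b \<in> {f. \<forall>m\<in>ks f. \<exists>s\<in>S. dvdm s m}"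
    using keys_add[of a b] by auto
next
  fix r a :: "('a,'b) mpoly"
  assume "a \<in> {f. \<forall>m\<in>ks f. \<exists>s\<in>S. dvdm s m}"
  then show "r * a \<in> {f. \<forall>m\<in>ks f. \<exists>s\<in>S. dvdm s m}"
    using keys_mult[of r a] by (fastforce intro: dvdm_add)
qed

lemma dvdm_obtain:
  fixes s m :: "'v::finite \<Rightarrow>\<^sub>0 nat"
  assumes "dvdm s m" obtains d where "m = d + s"
proof -
  let ?d = "Abs_poly_mapping (\<lambda>v. lk m v - lk s v)"
  have "lk ?d = (\<lambda>v. lk m v - lk s v)" by simp
  then have "m = ?d + s" using assms
    by (intro poly_mapping_eqI) (simp add: lookup_add dvdm_def)
  then show ?thesis using that by blast
qed

lemma mon_ideal_sub:
  fixes J :: "('v::finite, 'k::field) mpoly set"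
  assumes J: "is_ideal J" and S: "\<And>s. s \<in> S \<Longrightarrow> mon s \<in> J"
  shows "mon_ideal S \<subseteq> J"
proof
  fix f :: "('v, 'k) mpoly" assume f: "f \<in> mon_ideal S"
  have "Poly_Mapping.single m (lk f m) \<in> J" if m: "m \<in> ks f" for m
  proof -
    obtain s where s: "s \<in> S" "dvdm s m" using f m by (auto simp: mon_ideal_def)
    obtain d where d: "m = d + s" using dvdm_obtain[OF s(2)] by blast
    have "Poly_Mapping.single m (lk f m) = Poly_Mapping.single d (lk f m) * mon s"
      by (simp add: mon_def mult_single d)
    then show ?thesis using ideal_mult[OF J S[OF s(1)]] by simp
  qed
  then have "(\<Sum>m\<in>ks f. Poly_Mapping.single m (lk f m)) \<in> J"
    by (intro ideal_sum[OF J]) auto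
  then show "f \<in> J" using poly_expand[of f] by simp
qed

definition deg :: "'v set \<Rightarrow> ('v \<Rightarrow>\<^sub>0 nat) \<Rightarrow> nat" where
  "deg C m = (\<Sum>v\<in>C. lk m v)"

definition QQ :: "'v set \<Rightarrow> nat \<Rightarrow> ('v, 'k::field) mpoly set" where
  "QQ C k = {f. \<forall>m\<in>ks f. k \<le> deg C m}"

lemma deg_add: "deg C (a + b) = deg C a + deg C b"
  by (simp add: deg_def lookup_add sum.distrib)

lemma QQ_zero [simp]: "QQ C 0 = UNIV"
  by (auto simp: QQ_def)

lemma QQ_mult:
  assumes "a \<in> QQ C k1" "b \<in> QQ C k2" shows "a * b \<in> QQ C (k1 + k2)"
  unfolding QQ_def
proof (intro CollectI ballI)
  fix m assume "m \<in> ks (a * b)"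
  then obtain x y where xy: "m = x + y" "x \<in> ks a" "y \<in> ks b" using keys_mult[of a b] by blast
  have "k1 \<le> deg C x" "k2 \<le> deg C y" using assms xy by (auto simp: QQ_def)
  then show "k1 + k2 \<le> deg C m" by (simp add: xy deg_add add_mono)
qed

lemma QQ_ideal: "is_ideal (QQ C k)"
  unfolding is_ideal_def
proof (intro conjI ballI allI)
  show "0 \<in> QQ C k" by (simp add: QQ_def)
next
  fix a b :: "('a,'b) mpoly" assume "a \<in> QQ C k" "b \<in> QQ C k"
  then show "a + b \<in> QQ C k" using keys_add[of a b] by (auto simp: QQ_def)
next
  fix r a :: "('a,'b) mpoly" assume "a \<in> QQ C k"
  then show "r * a \<in> QQ C k" using QQ_mult[of r C 0 a k] by simp
qed

lemma QQ_diff: "a \<in> QQ C k \<Longrightarrow> b \<in> QQ C k \<Longrightarrow> a - b \<in> QQ C k"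
  using keys_diff_sub[of a b] by (auto simp: QQ_def)


lemma deg_mono:
  fixes C :: "'v::finite set"
  shows "C \<subseteq> C' \<Longrightarrow> deg C m \<le> deg C' m"
  unfolding deg_def by (rule sum_mono2) auto

lemma QQ_mono2:
  fixes C :: "'v::finite set"
  assumes "C \<subseteq> C'" shows "QQ C k \<subseteq> QQ C' k"
proof
  fix f :: "('v,'k::field) mpoly" assume "f \<in> QQ C k"
  then show "f \<in> QQ C' k" unfolding QQ_def using deg_mono[OF assms] order_trans by blast
qed

lemma deg_single:
  fixes C :: "'v::finite set"
  shows "deg C (Poly_Mapping.single c 1) = (if c \<in> C then 1 else 0)"
  unfolding deg_def by (simp add: lookup_single when_def)

lemma var_QQ:
  fixes C :: "'v::finite set"
  shows "c \<in> C \<Longrightarrow> (var c :: ('v,'k::field) mpoly) \<in> QQ C 1"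
  using deg_single[of C c] by (simp add: var_def QQ_def)

lemma var_pow_QQ:
  fixes C :: "'v::finite set"
  shows "c \<in> C \<Longrightarrow> (var c :: ('v,'k::field) mpoly) ^ n \<in> QQ C n"
proof (induction n)
  case 0 then show ?case by simp
next
  case (Suc n) then show ?case using QQ_mult[OF var_QQ[OF Suc(2)] Suc.IH] by simp
qed

lemma psi_exists:
  "\<exists>\<psi> :: ('v::finite \<Rightarrow>\<^sub>0 nat) \<Rightarrow> (nat \<Rightarrow>\<^sub>0 nat). inj \<psi> \<and> (\<forall>a b. \<psi> (a + b) = \<psi> a + \<psi> b)"
proof -
  obtain idx :: "'v \<Rightarrow> nat" and n where "idx ` UNIV = {i. i < n}" "inj_on idx UNIV"
    using finite_imp_inj_to_nat_seg[of "UNIV :: 'v set"] by auto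
  then have inj: "inj idx" by simp
  define \<psi> where "\<psi> m = Abs_poly_mapping (\<lambda>i. if i \<in> range idx then lk m (inv idx i) else 0)"
    for m :: "'v \<Rightarrow>\<^sub>0 nat"
  have fin: "finite {i. (if i \<in> range idx then lk m (inv idx i) else 0) \<noteq> (0::nat)}" for m :: "'v \<Rightarrow>\<^sub>0 nat"
    by (rule finite_subset[of _ "range idx"]) auto
  have l: "lk (\<psi> m) = (\<lambda>i. if i \<in> range idx then lk m (inv idx i) else 0)" for m
    unfolding \<psi>_def using fin by simp
  have "inj \<psi>"
  proof (rule injI)
    fix a b assume "\<psi> a = \<psi> b"
    then have "lk (\<psi> a) (idx v) = lk (\<psi> b) (idx v)" for v by simp
    then have "lk a v = lk b v" for v using l inj by (simp add: inv_f_f)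
    then show "a = b" by (rule poly_mapping_eqI)
  qed
  moreover have "\<psi> (a + b) = \<psi> a + \<psi> b" for a b
    by (rule poly_mapping_eqI) (simp add: l lookup_add)
  ultimately show ?thesis by blast
qed

lemma primary:
  fixes f g :: "('v::finite, 'k::field) mpoly"
  assumes nf: "f \<notin> QQ C k" and gf: "g * f \<in> QQ C k"
  shows "g \<in> QQ C 1"
proof (rule ccontr)
  assume "g \<notin> QQ C 1"
  then obtain a0 where a0: "a0 \<in> ks g" "deg C a0 = 0" by (auto simp: QQ_def)
  define h where "h m = (if deg C m < k then lk f m else 0)" for m
  have finh: "finite {m. h m \<noteq> 0}"
    by (rule finite_subset[of _ "ks f"]) (auto simp: h_def in_keys_iff)
  define f' where "f' = Abs_poly_mapping h"
  have lf': "lk f' m = (if deg C m < k then lk f m else 0)" for m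
    unfolding f'_def using finh by (simp add: h_def)
  have "f - f' \<in> QQ C k"
    unfolding QQ_def
  proof (intro CollectI ballI)
    fix m assume "m \<in> ks (f - f')"
    then have "lk f m - lk f' m \<noteq> 0" by (simp add: in_keys_iff lookup_minus)
    then show "k \<le> deg C m" using lf'[of m] by (cases "deg C m < k") auto
  qed
  then have "g * (f - f') \<in> QQ C k" by (rule ideal_mult[OF QQ_ideal])
  moreover have "g * f' = g * f - g * (f - f')" by (simp add: algebra_simps)
  ultimately have gf': "g * f' \<in> QQ C k"
    using QQ_diff[OF gf] by metis
  obtain b0 where b0: "b0 \<in> ks f" "deg C b0 < k" using nf by (auto simp: QQ_def not_le)
  have b0': "b0 \<in> ks f'" using b0 by (simp add: in_keys_iff lf')
  define e where "e = Min (deg C ` ks f')"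
  have e_le: "e \<le> deg C b" if "b \<in> ks f'" for b
    unfolding e_def using that by simp
  have e_in: "e \<in> deg C ` ks f'" unfolding e_def using b0' by (intro Min_in) auto
  have ek: "e < k" using e_le[OF b0'] b0 by simp
  define G0 where "G0 = {a \<in> ks g. deg C a = 0}"
  define F0 where "F0 = {b \<in> ks f'. deg C b = e}"
  have G0: "finite G0" "G0 \<noteq> {}" using a0 by (auto simp: G0_def)
  have F0: "finite F0" "F0 \<noteq> {}" using e_in by (auto simp: F0_def)
  obtain \<psi> :: "('v \<Rightarrow>\<^sub>0 nat) \<Rightarrow> (nat \<Rightarrow>\<^sub>0 nat)" where
    psi: "inj \<psi>" "\<And>a b. \<psi> (a + b) = \<psi> a + \<psi> b" using psi_exists by blast
  have "Max (\<psi> ` G0) \<in> \<psi> ` G0" using G0 by (intro Max_in) auto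
  then obtain a1 where a1: "a1 \<in> G0" "\<psi> a1 = Max (\<psi> ` G0)" by auto
  have a1max: "\<psi> a \<le> \<psi> a1" if "a \<in> G0" for a using a1 G0 that by simp
  have "Max (\<psi> ` F0) \<in> \<psi> ` F0" using F0 by (intro Max_in) auto
  then obtain b1 where b1: "b1 \<in> F0" "\<psi> b1 = Max (\<psi> ` F0)" by auto
  have b1max: "\<psi> b \<le> \<psi> b1" if "b \<in> F0" for b using b1 F0 that by simp
  have key: "a = a1 \<and> b = b1" if ab: "a \<in> ks g" "b \<in> ks f'" "a + b = a1 + b1" for a b
  proof -
    have "deg C a + deg C b = deg C a1 + deg C b1" using deg_add[of C a b] deg_add[of C a1 b1] ab(3) by simp
    moreover have "deg C a1 = 0" "deg C b1 = e" using a1 b1 by (auto simp: G0_def F0_def)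
    moreover have "e \<le> deg C b" using e_le ab(2) .
    ultimately have "deg C a = 0" "deg C b = e" by auto
    then have inG: "a \<in> G0" "b \<in> F0" using ab by (auto simp: G0_def F0_def)
    have s: "\<psi> a + \<psi> b = \<psi> a1 + \<psi> b1" using psi(2)[of a b] psi(2)[of a1 b1] ab(3) by simp
    have la: "\<psi> a \<le> \<psi> a1" and lb: "\<psi> b \<le> \<psi> b1" using a1max b1max inG by auto
    have "\<psi> a = \<psi> a1"
    proof (rule ccontr)
      assume "\<psi> a \<noteq> \<psi> a1"
      then have "\<psi> a < \<psi> a1" using la by simp
      then have "\<psi> a + \<psi> b < \<psi> a1 + \<psi> b1" using lb by (rule add_less_le_mono)
      then show False using s by simp
    qed
    moreover then have "\<psi> b = \<psi> b1" using s by simp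
    ultimately show ?thesis using psi(1) by (auto dest: injD)
  qed
  have "lk (g * f') (a1 + b1) = (\<Sum>(a, b). lk g a * lk f' b when a1 + b1 = a + b)"
    by (rule lookup_mult_pairs)
  also have "\<dots> = (\<Sum>ab. (case ab of (a, b) \<Rightarrow> lk g a * lk f' b) when (a1, b1) = ab)"
  proof (rule Sum_any.cong)
    fix ab :: "('v \<Rightarrow>\<^sub>0 nat) \<times> ('v \<Rightarrow>\<^sub>0 nat)"
    obtain a b where [simp]: "ab = (a, b)" by (cases ab)
    show "(case ab of (a, b) \<Rightarrow> lk g a * lk f' b when a1 + b1 = a + b) =
          ((case ab of (a, b) \<Rightarrow> lk g a * lk f' b) when (a1, b1) = ab)"
    proof (cases "lk g a * lk f' b = 0")
      case True then show ?thesis by (simp add: when_def)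
    next
      case False
      then have "a \<in> ks g" "b \<in> ks f'" by (auto simp: in_keys_iff)
      then show ?thesis using key[of a b] by (auto simp: when_def)
    qed
  qed
  also have "\<dots> = lk g a1 * lk f' b1" by simp
  finally have "lk (g * f') (a1 + b1) = lk g a1 * lk f' b1" .
  moreover have "lk g a1 \<noteq> 0" "lk f' b1 \<noteq> 0" using a1 b1 by (auto simp: G0_def F0_def in_keys_iff)
  ultimately have "a1 + b1 \<in> ks (g * f')" by (simp add: in_keys_iff)
  moreover have "deg C (a1 + b1) = e" using a1 b1 by (simp add: deg_add G0_def F0_def)
  ultimately show False using gf' ek by (auto simp: QQ_def)
qed

definition dominating :: "'v set set \<Rightarrow> 'v set \<Rightarrow> bool" where
  "dominating E D \<longleftrightarrow> (\<forall>i. closed_nbhd E i \<inter> D \<noteq> {})"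

definition packs :: "'v set set \<Rightarrow> nat \<Rightarrow> ('v \<Rightarrow> nat) \<Rightarrow> bool" where
  "packs E k w \<longleftrightarrow> (\<exists>xs. length xs = k \<and> (\<forall>v. length (filter (\<lambda>x. v \<in> closed_nbhd E x) xs) \<le> w v))"

definition good :: "'v set set \<Rightarrow> 'v set \<Rightarrow> 'v \<Rightarrow> bool" where
  "good E A i \<longleftrightarrow> (\<forall>B. B \<noteq> {} \<longrightarrow> B \<subseteq> closed_nbhd E i \<longrightarrow>
      (\<exists>x\<in>B. \<forall>b\<in>B. \<forall>j\<in>A. b \<in> closed_nbhd E j \<longrightarrow> x \<in> closed_nbhd E j))"

lemma sum_Un_le_nat:
  fixes f :: "'a \<Rightarrow> nat"
  shows "finite A \<Longrightarrow> finite B \<Longrightarrow> sum f (A \<union> B) \<le> sum f A + sum f B"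
  by (simp add: sum_Un_nat)

lemma packs_main:
  fixes E :: "'v::finite set set"
  assumes goodex: "\<And>A. A \<noteq> {} \<Longrightarrow> \<exists>i\<in>A. good E A i"
  shows "(\<forall>D. dominating E D \<longrightarrow> k \<le> (\<Sum>v\<in>D. w v)) \<Longrightarrow> packs E k w"
proof (induction k arbitrary: w)
  case 0 then show ?case unfolding packs_def by (intro exI[of _ "[]"]) simp
next
  case (Suc k)
  note H = Suc.prems
  let ?N = "closed_nbhd E"
  define Z where "Z = {v. w v = 0}"
  define A where "A = {i. ?N i \<inter> Z = {}}"
  have "A \<noteq> {}"
  proof
    assume "A = {}"
    then have "dominating E Z" by (auto simp: A_def dominating_def)
    moreover have "(\<Sum>v\<in>Z. w v) = 0" by (simp add: Z_def)
    moreover have "Suc k \<le> (\<Sum>v\<in>Z. w v)" if "dominating E Z" using H that by blast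
    ultimately show False by simp
  qed
  then obtain i where iA: "i \<in> A" and gi: "good E A i" using goodex by blast
  define ind where "ind v = (if v \<in> ?N i then 1 else (0::nat))" for v
  define w' where "w' v = w v - ind v" for v
  have wpos: "1 \<le> w v" if "v \<in> ?N i" for v using iA that by (auto simp: A_def Z_def)
  have wsplit: "w v = w' v + ind v" for v
    using wpos[of v] by (auto simp: w'_def ind_def)
  have "k \<le> (\<Sum>v\<in>D. w' v)" if dD: "dominating E D" for D
  proof -
    define B where "B = D \<inter> ?N i"
    have "B \<noteq> {}" using dD by (auto simp: B_def dominating_def)
    moreover have "B \<subseteq> ?N i" by (auto simp: B_def)
    ultimately obtain x where xB: "x \<in> B"
      and xp: "\<And>b j. b \<in> B \<Longrightarrow> j \<in> A \<Longrightarrow> b \<in> ?N j \<Longrightarrow> x \<in> ?N j"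
      using gi unfolding good_def by metis
    define D2 where "D2 = (D - ?N i) \<union> {x} \<union> Z"
    have "dominating E D2"
      unfolding dominating_def
    proof
      fix j
      show "?N j \<inter> D2 \<noteq> {}"
      proof (cases "j \<in> A")
        case False then show ?thesis by (auto simp: A_def D2_def)
      next
        case True
        obtain y where y: "y \<in> ?N j" "y \<in> D" using dD unfolding dominating_def by blast
        show ?thesis
        proof (cases "y \<in> ?N i")
          case True
          then have "y \<in> B" using y by (simp add: B_def)
          then have "x \<in> ?N j" using xp \<open>j \<in> A\<close> y(1) by blast
          then show ?thesis by (auto simp: D2_def)
        next
          case False then show ?thesis using y by (auto simp: D2_def)
        qed
      qed
    qed
    then have "Suc k \<le> (\<Sum>v\<in>D2. w v)" using H by blast
    also have "\<dots> \<le> (\<Sum>v\<in>(D - ?N i) \<union> {x}. w v) + (\<Sum>v\<in>Z. w v)"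
      unfolding D2_def by (rule sum_Un_le_nat) auto
    also have "\<dots> \<le> (\<Sum>v\<in>D - ?N i. w v) + w x"
      using sum_Un_le_nat[of "D - ?N i" "{x}" w] by (simp add: Z_def)
    finally have k1: "Suc k \<le> (\<Sum>v\<in>D - ?N i. w v) + w x" .
    have "(\<Sum>v\<in>B. w v) = w x + (\<Sum>v\<in>B - {x}. w v)"
      using xB by (simp add: sum.remove)
    moreover have "(\<Sum>v\<in>B - {x}. (1::nat)) \<le> (\<Sum>v\<in>B - {x}. w v)"
      by (rule sum_mono) (use wpos in \<open>auto simp: B_def\<close>)
    then have "card (B - {x}) \<le> (\<Sum>v\<in>B - {x}. w v)" by simp
    moreover have "card (B - {x}) = card B - 1" using xB by simp
    moreover have "card B \<ge> 1" using xB by (auto simp: Suc_le_eq card_gt_0_iff)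
    ultimately have kB: "(\<Sum>v\<in>B. w v) + 1 \<ge> w x + card B" by linarith
    have "(\<Sum>v\<in>D. w v) = (\<Sum>v\<in>D - ?N i. w v) + (\<Sum>v\<in>B. w v)"
    proof -
      have "D - B = D - ?N i" by (auto simp: B_def)
      moreover have "B \<subseteq> D" by (auto simp: B_def)
      ultimately show ?thesis using sum.subset_diff[of B D w] by simp
    qed
    moreover have "(\<Sum>v\<in>D. w v) = (\<Sum>v\<in>D. w' v) + card B"
    proof -
      have "(\<Sum>v\<in>D. w v) = (\<Sum>v\<in>D. w' v) + (\<Sum>v\<in>D. ind v)"
        by (simp add: wsplit sum.distrib)
      moreover have "(\<Sum>v\<in>D. ind v) = card B"
        unfolding ind_def B_def by (simp add: sum.If_cases)
      ultimately show ?thesis by simp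
    qed
    ultimately show ?thesis using k1 kB by linarith
  qed
  then have "packs E k w'" using Suc.IH by blast
  then obtain xs where xs: "length xs = k" "\<And>v. length (filter (\<lambda>x. v \<in> ?N x) xs) \<le> w' v"
    unfolding packs_def by blast
  show ?case unfolding packs_def
  proof (intro exI[of _ "i # xs"] conjI allI)
    show "length (i # xs) = Suc k" using xs by simp
    fix v
    show "length (filter (\<lambda>x. v \<in> ?N x) (i # xs)) \<le> w v"
      using xs(2)[of v] wsplit[of v] by (auto simp: ind_def)
  qed
qed

definition gpath :: "'v set set \<Rightarrow> 'v list \<Rightarrow> bool" where
  "gpath E ps \<longleftrightarrow> distinct ps \<and> (\<forall>t. Suc t < length ps \<longrightarrow> {ps ! t, ps ! Suc t} \<in> E)"

lemma edge_ne: "simple_graph E \<Longrightarrow> {a, b} \<in> E \<Longrightarrow> a \<noteq> b"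
  unfolding simple_graph_def by (metis doubleton_eq_iff)

lemma mem_N: "b \<in> closed_nbhd E j \<longleftrightarrow> b = j \<or> {j, b} \<in> E"
  by (auto simp: closed_nbhd_def)

lemma path_cycle:
  assumes sg: "simple_graph E" and p: "gpath E qs" and l: "3 \<le> length qs"
    and e: "{last qs, hd qs} \<in> E"
  shows "is_cycle E qs"
  unfolding is_cycle_def adj_def
proof (intro conjI allI impI)
  show "3 \<le> length qs" by (rule l)
  show "distinct qs" using p by (simp add: gpath_def)
  show "{last qs, hd qs} \<in> E" by (rule e)
  show "last qs \<noteq> hd qs" by (rule edge_ne[OF sg e])
  fix t assume t: "Suc t < length qs"
  show "{qs ! t, qs ! Suc t} \<in> E" using p t by (simp add: gpath_def)
  then show "qs ! t \<noteq> qs ! Suc t" by (rule edge_ne[OF sg])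
qed

lemma path_drop: assumes "gpath E ps" shows "gpath E (drop j ps)"
  unfolding gpath_def
proof (intro conjI allI impI)
  show "distinct (drop j ps)" using assms by (simp add: gpath_def)
  fix t assume t: "Suc t < length (drop j ps)"
  then have "Suc (j + t) < length ps" by simp
  then have "{ps ! (j + t), ps ! Suc (j + t)} \<in> E" using assms by (simp add: gpath_def)
  then show "{drop j ps ! t, drop j ps ! Suc t} \<in> E" using t by simp
qed

lemma path_snoc:
  assumes "gpath E ps" "ps \<noteq> []" "c \<notin> set ps" "{last ps, c} \<in> E"
  shows "gpath E (ps @ [c])"
  unfolding gpath_def
proof (intro conjI allI impI)
  show "distinct (ps @ [c])" using assms unfolding gpath_def by simp
  fix t assume t: "Suc t < length (ps @ [c])"
  show "{(ps @ [c]) ! t, (ps @ [c]) ! Suc t} \<in> E"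
  proof (cases "Suc t < length ps")
    case True then show ?thesis using assms(1) by (simp add: nth_append gpath_def)
  next
    case False
    then have "t = length ps - 1" "Suc t = length ps" using t by simp_all
    then show ?thesis using assms(2,4) by (simp add: nth_append last_conv_nth)
  qed
qed

lemma tree_struct:
  fixes E :: "'v::finite set set"
  assumes sg: "simple_graph E" and ac: "\<nexists>vs. is_cycle E vs" and A: "A \<noteq> {}"
  shows "\<exists>i\<in>A. \<exists>p. \<forall>c. {i, c} \<in> E \<longrightarrow> c \<noteq> p \<longrightarrow> c \<notin> A \<and> (\<forall>d. {c, d} \<in> E \<longrightarrow> d \<in> A \<longrightarrow> d = i)"
proof -
  define P where "P ps \<longleftrightarrow> ps \<noteq> [] \<and> last ps \<in> A \<and> gpath E ps" for ps
  obtain a where a: "a \<in> A" using A by blast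
  have Pa: "P [a]" using a by (simp add: P_def gpath_def)
  have bound: "length ps < Suc (card (UNIV :: 'v set))" if "P ps" for ps
  proof -
    have "distinct ps" using that by (simp add: P_def gpath_def)
    then have "length ps = card (set ps)" by (simp add: distinct_card)
    also have "\<dots> \<le> card (UNIV :: 'v set)" by (rule card_mono) auto
    finally show ?thesis by simp
  qed
  obtain ps where Pps: "P ps" and maxps: "\<And>qs. P qs \<Longrightarrow> length qs \<le> length ps"
    using ex_has_greatest_nat[of P "[a]" length, OF Pa] bound by blast
  define n where "n = length ps"
  define i where "i = last ps"
  define p where "p = (if 2 \<le> n then ps ! (n - 2) else i)"
  have ne: "ps \<noteq> []" and iA: "i \<in> A" and pp: "gpath E ps"
    using Pps by (auto simp: P_def i_def)
  have n1: "1 \<le> n" using ne by (simp add: n_def Suc_le_eq)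
  have ilast: "i = ps ! (n - 1)" using ne by (simp add: i_def n_def last_conv_nth)
  have cyc_tail: False if j: "j < n" "j + 2 \<le> n" "{ps ! j, c} \<in> E" "c \<notin> set ps" "{i, c} \<in> E" for j c
  proof -
    define qs where "qs = drop j ps @ [c]"
    have dn: "drop j ps \<noteq> []" using j by (simp add: n_def)
    have "last (drop j ps) = i" using j by (simp add: i_def n_def)
    moreover have "c \<notin> set (drop j ps)" using j(4) in_set_dropD by metis
    ultimately have "gpath E qs" unfolding qs_def
      using path_snoc[OF path_drop[OF pp] dn] j(5) by simp
    moreover have "3 \<le> length qs" using j by (simp add: qs_def n_def)
    moreover have "{last qs, hd qs} \<in> E" using j dn
      by (simp add: qs_def hd_drop_conv_nth n_def insert_commute)
    ultimately show False using path_cycle[OF sg] ac by blast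
  qed
  have notin: "c \<notin> set ps" if c: "{i, c} \<in> E" "c \<noteq> p" for c
  proof
    assume "c \<in> set ps"
    then obtain j where j: "j < n" "ps ! j = c" by (auto simp: in_set_conv_nth n_def)
    have "c \<noteq> i" using edge_ne[OF sg c(1)] by simp
    then have "j \<noteq> n - 1" using ilast j by auto
    moreover have "j \<noteq> n - 2" if "2 \<le> n" using c(2) j that by (auto simp: p_def)
    ultimately have j3: "j + 3 \<le> n" using j(1) by (cases "2 \<le> n") auto
    define qs where "qs = drop j ps"
    have "gpath E qs" unfolding qs_def by (rule path_drop[OF pp])
    moreover have "3 \<le> length qs" using j3 by (simp add: qs_def n_def)
    moreover have "{last qs, hd qs} \<in> E" using j j3 c(1)
      by (simp add: qs_def hd_drop_conv_nth n_def i_def)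
    ultimately show False using path_cycle[OF sg] ac by blast
  qed
  have "\<forall>c. {i, c} \<in> E \<longrightarrow> c \<noteq> p \<longrightarrow> c \<notin> A \<and> (\<forall>d. {c, d} \<in> E \<longrightarrow> d \<in> A \<longrightarrow> d = i)"
  proof (intro allI impI conjI)
    fix c assume c: "{i, c} \<in> E" "c \<noteq> p"
    have cn: "c \<notin> set ps" using notin c by blast
    have Psn: "gpath E (ps @ [c])" using path_snoc[OF pp ne cn] c(1) by (simp add: i_def)
    show "c \<notin> A"
    proof
      assume "c \<in> A"
      then have "P (ps @ [c])" using Psn by (simp add: P_def)
      then show False using maxps by fastforce
    qed
    fix d assume d: "{c, d} \<in> E" "d \<in> A"
    show "d = i"
    proof (rule ccontr)
      assume di: "d \<noteq> i"
      have dc: "d \<noteq> c" using edge_ne[OF sg d(1)] by simp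
      show False
      proof (cases "d \<in> set ps")
        case False
        then have "d \<notin> set (ps @ [c])" using dc by simp
        then have "gpath E (ps @ [c] @ [d])" using path_snoc[OF Psn _ _] d(1) by simp
        then have "P (ps @ [c] @ [d])" using d(2) by (simp add: P_def)
        then show False using maxps by fastforce
      next
        case True
        then obtain j where j: "j < n" "ps ! j = d" by (auto simp: in_set_conv_nth n_def)
        then have "j \<noteq> n - 1" using ilast di by auto
        then have "j + 2 \<le> n" using j(1) n1 by linarith
        then show False using cyc_tail[of j c] j d(1) cn c(1) by (simp add: insert_commute)
      qed
    qed
  qed
  then show ?thesis using iA by blast
qed

lemma good_from_struct:
  assumes iA: "i \<in> A"
    and st: "\<forall>c. {i, c} \<in> E \<longrightarrow> c \<noteq> p \<longrightarrow> c \<notin> A \<and> (\<forall>d. {c, d} \<in> E \<longrightarrow> d \<in> A \<longrightarrow> d = i)"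
  shows "good E A i"
proof -
  let ?N = "closed_nbhd E"
  have sym: "{a, b} \<in> E \<Longrightarrow> {b, a} \<in> E" for a b by (simp add: insert_commute)
  have leaf: "j = i" if "b \<in> ?N i" "b \<noteq> i" "b \<noteq> p" "j \<in> A" "b \<in> ?N j" for b j
  proof -
    have bi: "{i, b} \<in> E" using that(1,2) by (auto simp: mem_N)
    have "b \<notin> A" using st bi that(3) by blast
    then have "j \<noteq> b" using that(4) by auto
    then have "{j, b} \<in> E" using that(5) by (auto simp: mem_N)
    then have "{b, j} \<in> E" by (rule sym)
    then show ?thesis using st bi that(3,4) by blast
  qed
  have ip: "p \<in> ?N p" "i \<in> ?N i" by (auto simp: mem_N)
  have ii: "j = p" if "j \<in> A" "i \<in> ?N j" "j \<noteq> i" for j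
  proof -
    have "{j, i} \<in> E" using that by (auto simp: mem_N)
    then have "{i, j} \<in> E" by (rule sym)
    then show ?thesis using st that(1) by blast
  qed
  show ?thesis unfolding good_def
  proof (intro allI impI)
    fix B assume B: "B \<noteq> {}" "B \<subseteq> ?N i"
    show "\<exists>x\<in>B. \<forall>b\<in>B. \<forall>j\<in>A. b \<in> ?N j \<longrightarrow> x \<in> ?N j"
    proof (cases "p \<in> B")
      case True
      show ?thesis
      proof (intro bexI[OF _ True] ballI impI)
        fix b j assume b: "b \<in> B" "j \<in> A" "b \<in> ?N j"
        show "p \<in> ?N j"
        proof (cases "b = p")
          case True then show ?thesis using b by simp
        next
          case bp: False
          show ?thesis
          proof (cases "b = i")
            case True
            then show ?thesis using ii[of j] b \<open>p \<in> B\<close> B(2) ip by (cases "j = i") auto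
          next
            case False
            then have "j = i" using leaf[of b j] b B(2) bp by blast
            then show ?thesis using \<open>p \<in> B\<close> B(2) by auto
          qed
        qed
      qed
    next
      case pB: False
      show ?thesis
      proof (cases "i \<in> B")
        case True
        show ?thesis
        proof (intro bexI[OF _ True] ballI impI)
          fix b j assume b: "b \<in> B" "j \<in> A" "b \<in> ?N j"
          show "i \<in> ?N j"
          proof (cases "b = i")
            case True then show ?thesis using b by simp
          next
            case False
            then have "j = i" using leaf[of b j] b B(2) pB by blast
            then show ?thesis using ip by simp
          qed
        qed
      next
        case iB: False
        obtain x where x: "x \<in> B" using B by blast
        show ?thesis
        proof (intro bexI[OF _ x] ballI impI)
          fix b j assume b: "b \<in> B" "j \<in> A" "b \<in> ?N j"
          have "j = i" using leaf[of b j] b B(2) pB iB by (metis subsetD)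
          then show "x \<in> ?N j" using x B(2) by auto
        qed
      qed
    qed
  qed
qed

lemma goodex:
  fixes E :: "'v::finite set set"
  assumes "is_tree E" "A \<noteq> {}"
  shows "\<exists>i\<in>A. good E A i"
proof -
  have sg: "simple_graph E" and ac: "\<nexists>vs. is_cycle E vs" using assms(1) by (simp_all add: is_tree_def)
  obtain i where i: "i \<in> A" and "\<exists>p. \<forall>c. {i, c} \<in> E \<longrightarrow> c \<noteq> p \<longrightarrow> c \<notin> A \<and> (\<forall>d. {c, d} \<in> E \<longrightarrow> d \<in> A \<longrightarrow> d = i)"
    using tree_struct[OF sg ac assms(2)] by (elim bexE) 
  then obtain p where "\<forall>c. {i, c} \<in> E \<longrightarrow> c \<noteq> p \<longrightarrow> c \<notin> A \<and> (\<forall>d. {c, d} \<in> E \<longrightarrow> d \<in> A \<longrightarrow> d = i)"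
    by (elim exE)
  from good_from_struct[OF i this] i show ?thesis by (rule bexI)
qed

definition gen :: "'v::finite set set \<Rightarrow> 'v \<Rightarrow> ('v \<Rightarrow>\<^sub>0 nat)" where
  "gen E i = Abs_poly_mapping (\<lambda>v. if v \<in> closed_nbhd E i then 1 else 0)"

lemma lk_gen: "lk (gen E i) v = (if v \<in> closed_nbhd E i then 1 else 0)"
  unfolding gen_def by simp

definition Sk :: "'v::finite set set \<Rightarrow> nat \<Rightarrow> ('v \<Rightarrow>\<^sub>0 nat) set" where
  "Sk E k = {sum_list (map (gen E) xs) | xs. length xs = k}"

lemma lk_sum_gen:
  "lk (sum_list (map (gen E) xs)) v = length (filter (\<lambda>x. v \<in> closed_nbhd E x) xs)"
  by (induction xs) (auto simp: lookup_add lk_gen)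

lemma dvdm_Sk_iff: "(\<exists>s\<in>Sk E k. dvdm s m) \<longleftrightarrow> packs E k (lk m)"
  unfolding Sk_def packs_def dvdm_def by (auto simp: lk_sum_gen)

lemma packs_dom:
  assumes "dominating E D"
  shows "length xs \<le> (\<Sum>v\<in>D. length (filter (\<lambda>x. v \<in> closed_nbhd E x) (xs :: 'v::finite list)))"
proof (induction xs)
  case Nil then show ?case by simp
next
  case (Cons a xs)
  have "(\<Sum>v\<in>D. length (filter (\<lambda>x. v \<in> closed_nbhd E x) (a # xs)))
     = (\<Sum>v\<in>D. (if v \<in> closed_nbhd E a then 1 else 0)) + (\<Sum>v\<in>D. length (filter (\<lambda>x. v \<in> closed_nbhd E x) xs))"
    unfolding sum.distrib[symmetric] by (rule sum.cong) auto
  moreover have "(\<Sum>v\<in>D. (if v \<in> closed_nbhd E a then 1 else (0::nat))) = card (D \<inter> closed_nbhd E a)"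
    by (simp add: sum.If_cases)
  moreover have "card (D \<inter> closed_nbhd E a) \<ge> 1"
    using assms unfolding dominating_def by (metis One_nat_def Suc_leI card_gt_0_iff finite inf_commute)
  ultimately show ?case using Cons by simp
qed

lemma packs_iff:
  fixes E :: "'v::finite set set"
  assumes "is_tree E"
  shows "packs E k w \<longleftrightarrow> (\<forall>D. dominating E D \<longrightarrow> k \<le> (\<Sum>v\<in>D. w v))"
proof
  assume "packs E k w"
  then obtain xs where xs: "length xs = k" "\<And>v. length (filter (\<lambda>x. v \<in> closed_nbhd E x) xs) \<le> w v"
    unfolding packs_def by blast
  show "\<forall>D. dominating E D \<longrightarrow> k \<le> (\<Sum>v\<in>D. w v)"
  proof (intro allI impI)
    fix D assume "dominating E D"
    then have "k \<le> (\<Sum>v\<in>D. length (filter (\<lambda>x. v \<in> closed_nbhd E x) xs))" using packs_dom xs(1) by blast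
    also have "\<dots> \<le> (\<Sum>v\<in>D. w v)" by (rule sum_mono) (rule xs(2))
    finally show "k \<le> (\<Sum>v\<in>D. w v)" .
  qed
next
  assume "\<forall>D. dominating E D \<longrightarrow> k \<le> (\<Sum>v\<in>D. w v)"
  then show "packs E k w" using packs_main[of E k w] goodex[OF assms] by blast
qed

lemma mem_Sk_ideal:
  fixes E :: "'v::finite set set"
  assumes "is_tree E"
  shows "(f :: ('v,'k::field) mpoly) \<in> mon_ideal (Sk E k) \<longleftrightarrow> (\<forall>D. dominating E D \<longrightarrow> f \<in> QQ D k)"
  unfolding mon_ideal_def QQ_def dvdm_Sk_iff packs_iff[OF assms] deg_def by blast

lemma var_mon: "var j = mon (Poly_Mapping.single j 1)"
  by (simp add: var_def mon_def)

lemma prod_var: "(\<Prod>j\<in>A. var j :: ('v, 'k::field) mpoly) = mon (\<Sum>j\<in>A. Poly_Mapping.single j 1)"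
proof (induction A rule: infinite_finite_induct)
  case (infinite A) then show ?case by (simp add: mon_def)
next
  case empty then show ?case by (simp add: mon_def)
next
  case (insert x F) then show ?case by (simp add: var_mon mon_mult)
qed

lemma sum_single_gen: "(\<Sum>j\<in>closed_nbhd E i. Poly_Mapping.single j (1::nat)) = gen E i"
proof (rule poly_mapping_eqI)
  fix v
  have "lk (\<Sum>j\<in>closed_nbhd E i. Poly_Mapping.single j (1::nat)) v = (\<Sum>j\<in>closed_nbhd E i. (1 when j = v))"
    by (simp add: lookup_sum lookup_single)
  also have "\<dots> = (if v \<in> closed_nbhd E i then 1 else 0)"
    by (simp add: when_def)
  finally show "lk (\<Sum>j\<in>closed_nbhd E i. Poly_Mapping.single j (1::nat)) v = lk (gen E i) v"
    by (simp add: lk_gen)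
qed

lemma Sk1: "Sk E 1 = range (gen E)"
proof
  show "Sk E 1 \<subseteq> range (gen E)" unfolding Sk_def by (auto simp: length_Suc_conv)
  show "range (gen E) \<subseteq> Sk E 1"
  proof
    fix s assume "s \<in> range (gen E)"
    then obtain i where "s = gen E i" by blast
    then show "s \<in> Sk E 1" unfolding Sk_def by (intro CollectI exI[of _ "[i]"]) simp
  qed
qed

lemma mon_gen_in: "(mon (gen E i) :: ('v::finite,'k::field) mpoly) \<in> mon_ideal (Sk E 1)"
  unfolding mon_ideal_def Sk1 dvdm_def by auto

lemma NI_eq: "(closed_nbhd_ideal E :: ('v::finite,'k::field) mpoly set) = mon_ideal (Sk E 1)"
proof
  show "closed_nbhd_ideal E \<subseteq> (mon_ideal (Sk E 1) :: ('v,'k) mpoly set)"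
    unfolding closed_nbhd_ideal_def
  proof (rule ideal_gen_sub[OF mon_ideal_ideal], rule subsetI)
    fix x assume "x \<in> {\<Prod>j\<in>closed_nbhd E i. var j :: ('v,'k) mpoly |i. True}"
    then obtain i where "x = (\<Prod>j\<in>closed_nbhd E i. var j :: ('v,'k) mpoly)" by blast
    then have "x = mon (gen E i)" unfolding prod_var sum_single_gen .
    then show "x \<in> mon_ideal (Sk E 1)" using mon_gen_in[of E i] by (simp only:)
  qed
  show "(mon_ideal (Sk E 1) :: ('v,'k) mpoly set) \<subseteq> closed_nbhd_ideal E"
    unfolding closed_nbhd_ideal_def
  proof (rule mon_ideal_sub[OF ideal_gen_ideal])
    fix s assume "s \<in> Sk E 1"
    then have "s \<in> range (gen E)" unfolding Sk1 .
    then obtain i where "s = gen E i" by blast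
    then have "mon s = (\<Prod>j\<in>closed_nbhd E i. var j :: ('v,'k) mpoly)"
      unfolding prod_var sum_single_gen by simp
    then have "mon s \<in> {\<Prod>j\<in>closed_nbhd E i. var j :: ('v,'k) mpoly |i. True}" by blast
    then show "mon s \<in> ideal_gen {\<Prod>j\<in>closed_nbhd E i. var j :: ('v,'k) mpoly |i. True}"
      by (rule subsetD[OF ideal_gen_super])
  qed
qed

lemma mon_ideal_mult:
  assumes "f \<in> mon_ideal (Sk E a)" "g \<in> mon_ideal (Sk E b)"
  shows "(f * g :: ('v::finite,'k::field) mpoly) \<in> mon_ideal (Sk E (a + b))"
  unfolding mon_ideal_def
proof (intro CollectI ballI)
  fix m assume "m \<in> ks (f * g)"
  then obtain x y where xy: "m = x + y" "x \<in> ks f" "y \<in> ks g" using keys_mult[of f g] by blast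
  obtain s1 where s1: "s1 \<in> Sk E a" "dvdm s1 x" using assms(1) xy by (auto simp: mon_ideal_def)
  obtain s2 where s2: "s2 \<in> Sk E b" "dvdm s2 y" using assms(2) xy by (auto simp: mon_ideal_def)
  obtain xs1 where x1: "s1 = sum_list (map (gen E) xs1)" "length xs1 = a" using s1 by (auto simp: Sk_def)
  obtain xs2 where x2: "s2 = sum_list (map (gen E) xs2)" "length xs2 = b" using s2 by (auto simp: Sk_def)
  have "s1 + s2 \<in> Sk E (a + b)" unfolding Sk_def
    by (rule CollectI, rule exI[of _ "xs1 @ xs2"]) (simp add: x1 x2)
  moreover have "dvdm (s1 + s2) m" using dvdm_add2[OF s1(2) s2(2)] xy by simp
  ultimately show "\<exists>s\<in>Sk E (a + b). dvdm s m" by blast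
qed

lemma prod_list_in:
  "set xs \<subseteq> mon_ideal (Sk E 1) \<Longrightarrow> (prod_list xs :: ('v::finite,'k::field) mpoly) \<in> mon_ideal (Sk E (length xs))"
proof (induction xs)
  case Nil
  have z: "(0 :: 'v \<Rightarrow>\<^sub>0 nat) \<in> Sk E 0" unfolding Sk_def by auto
  have k1: "ks (1 :: ('v,'k) mpoly) = {0}" by simp
  have d0: "dvdm 0 (0 :: 'v \<Rightarrow>\<^sub>0 nat)" by (simp add: dvdm_def)
  have "(1 :: ('v,'k) mpoly) \<in> mon_ideal (Sk E 0)"
    unfolding mon_ideal_def mem_Collect_eq k1 using z d0 by blast
  then show ?case by simp
next
  case (Cons a xs)
  then show ?case using mon_ideal_mult[of a E 1 "prod_list xs" "length xs"] by simp
qed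

lemma mon_sum_gen: "(mon (sum_list (map (gen E) xs)) :: ('v::finite,'k::field) mpoly) = prod_list (map (\<lambda>x. mon (gen E x)) xs)"
proof (induction xs)
  case Nil then show ?case by (simp add: mon_def)
next
  case (Cons a xs) then show ?case by (simp add: mon_mult[symmetric])
qed

lemma pow_eq:
  "ideal_pow (mon_ideal (Sk E 1) :: ('v::finite,'k::field) mpoly set) k = mon_ideal (Sk E k)"
proof
  show "ideal_pow (mon_ideal (Sk E 1) :: ('v,'k) mpoly set) k \<subseteq> mon_ideal (Sk E k)"
    unfolding ideal_pow_def
  proof (rule ideal_gen_sub[OF mon_ideal_ideal], rule subsetI)
    fix x assume "x \<in> {prod_list ys |ys. length ys = k \<and> set ys \<subseteq> (mon_ideal (Sk E 1) :: ('v,'k) mpoly set)}"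
    then obtain ys where ys: "x = prod_list ys" "length ys = k" "set ys \<subseteq> (mon_ideal (Sk E 1) :: ('v,'k) mpoly set)"
      by blast
    from prod_list_in[OF ys(3)] ys(1,2) show "x \<in> mon_ideal (Sk E k)" by simp
  qed
  show "mon_ideal (Sk E k) \<subseteq> ideal_pow (mon_ideal (Sk E 1) :: ('v,'k) mpoly set) k"
    unfolding ideal_pow_def
  proof (rule mon_ideal_sub[OF ideal_gen_ideal])
    fix s assume "s \<in> Sk E k"
    then obtain xs where xs: "s = sum_list (map (gen E) xs)" "length xs = k" by (auto simp: Sk_def)
    have "mon s = prod_list (map (\<lambda>x. mon (gen E x)) xs)" by (simp add: xs mon_sum_gen)
    moreover have "set (map (\<lambda>x. mon (gen E x)) xs) \<subseteq> (mon_ideal (Sk E 1) :: ('v,'k) mpoly set)"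
    proof
      fix y :: "('v,'k) mpoly" assume "y \<in> set (map (\<lambda>x. mon (gen E x)) xs)"
      then obtain x where "y = mon (gen E x)" by auto
      then show "y \<in> (mon_ideal (Sk E 1) :: ('v,'k) mpoly set)" using mon_gen_in[of E x] by (simp only:)
    qed
    ultimately have "mon s \<in> {prod_list ys |ys. length ys = k \<and> set ys \<subseteq> (mon_ideal (Sk E 1) :: ('v,'k) mpoly set)}"
      using xs(2) by (intro CollectI exI[of _ "map (\<lambda>x. mon (gen E x)) xs"]) simp
    then show "mon s \<in> ideal_gen {prod_list ys |ys. length ys = k \<and> set ys \<subseteq> (mon_ideal (Sk E 1) :: ('v,'k) mpoly set)}"
      by (rule subsetD[OF ideal_gen_super])
  qed
qed

lemma prime_prod:
  assumes P: "prime_ideal P" and S: "finite S"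
  shows "(\<Prod>x\<in>S. a x) \<in> P \<Longrightarrow> \<exists>x\<in>S. a x \<in> P"
  using S
proof (induction S rule: finite_induct)
  case empty then show ?case using P by (simp add: prime_ideal_def)
next
  case (insert x F)
  then have "a x * (\<Prod>x\<in>F. a x) \<in> P" by simp
  then have "a x \<in> P \<or> (\<Prod>x\<in>F. a x) \<in> P" using P by (simp add: prime_ideal_def)
  then show ?case using insert by blast
qed

lemma prime_pow:
  assumes P: "prime_ideal P" shows "x ^ n \<in> P \<Longrightarrow> x \<in> P"
proof (induction n)
  case 0 then show ?case using P by (simp add: prime_ideal_def)
next
  case (Suc n)
  then have "x * x ^ n \<in> P" by simp
  then show ?case using Suc P by (auto simp: prime_ideal_def)
qed

lemma memJ:
  fixes E :: "'v::finite set set"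
  assumes "is_tree E"
  shows "(g :: ('v,'k::field) mpoly) \<in> ideal_pow (closed_nbhd_ideal E) k \<longleftrightarrow> (\<forall>D. dominating E D \<longrightarrow> g \<in> QQ D k)"
  unfolding NI_eq pow_eq mem_Sk_ideal[OF assms] ..

lemma memI:
  fixes E :: "'v::finite set set"
  assumes "is_tree E"
  shows "(g :: ('v,'k::field) mpoly) \<in> closed_nbhd_ideal E \<longleftrightarrow> (\<forall>D. dominating E D \<longrightarrow> g \<in> QQ D 1)"
  unfolding NI_eq mem_Sk_ideal[OF assms] ..

lemma QQ1_sub:
  fixes D0 :: "'v::finite set"
  assumes P: "is_ideal (P :: ('v,'k::field) mpoly set)" and vars: "\<And>v. v \<in> D0 \<Longrightarrow> var v \<in> P"
  shows "QQ D0 1 \<subseteq> P"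
proof -
  have "QQ D0 1 \<subseteq> (mon_ideal {Poly_Mapping.single v 1 | v. v \<in> D0} :: ('v,'k) mpoly set)"
  proof
    fix g :: "('v,'k) mpoly" assume g: "g \<in> QQ D0 1"
    show "g \<in> mon_ideal {Poly_Mapping.single v 1 | v. v \<in> D0}"
      unfolding mon_ideal_def
    proof (intro CollectI ballI)
      fix m assume "m \<in> ks g"
      then have "1 \<le> deg D0 m" using g by (auto simp: QQ_def)
      then have "deg D0 m \<noteq> 0" by linarith
      then obtain v where v: "v \<in> D0" "lk m v \<noteq> 0"
        unfolding deg_def by (rule sum.not_neutral_contains_not_neutral)
      have "dvdm (Poly_Mapping.single v 1) m"
        unfolding dvdm_def using v by (auto simp: lookup_single when_def)
      then show "\<exists>s\<in>{Poly_Mapping.single v 1 | v. v \<in> D0}. dvdm s m" using v by blast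
    qed
  qed
  also have "\<dots> \<subseteq> P"
  proof (rule mon_ideal_sub[OF P])
    fix s :: "'v \<Rightarrow>\<^sub>0 nat" assume "s \<in> {Poly_Mapping.single v 1 | v. v \<in> D0}"
    then obtain v where "s = Poly_Mapping.single v 1" "v \<in> D0" by blast
    then show "mon s \<in> P" using vars[of v] by (simp add: var_mon)
  qed
  finally show ?thesis .
qed

theorem corollary2p6:
  fixes E :: "'v::finite set set"
  assumes "is_tree E"
  shows "normally_torsion_free (closed_nbhd_ideal E :: ('v, 'k::field) mpoly set)"
  unfolding normally_torsion_free_def
proof (intro allI impI subsetI)
  fix k :: nat and P :: "('v,'k) mpoly set"
  assume k: "1 \<le> k" and PA: "P \<in> Ass (ideal_pow (closed_nbhd_ideal E) k)"
  let ?I = "closed_nbhd_ideal E :: ('v,'k) mpoly set"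
  let ?J = "ideal_pow ?I k"
  obtain f where Pp: "prime_ideal P" and Pf: "P = ideal_colon ?J f"
    using PA unfolding Ass_def by blast
  have Pid: "is_ideal P" using Pp by (simp add: prime_ideal_def)
  have memP: "g \<in> P \<longleftrightarrow> (\<forall>D. dominating E D \<longrightarrow> g * f \<in> QQ D k)" for g
    unfolding Pf ideal_colon_def using memJ[OF assms] by blast
  define S where "S = {D. dominating E D \<and> f \<notin> QQ D k}"
  have PsubQ: "P \<subseteq> QQ D 1" if "D \<in> S" for D
  proof
    fix g assume "g \<in> P"
    then have "g * f \<in> QQ D k" using memP that by (auto simp: S_def)
    then show "g \<in> QQ D 1" using primary[of f D k g] that by (auto simp: S_def)
  qed
  have "\<exists>D0\<in>S. \<forall>v\<in>D0. var v \<in> P"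
  proof (rule ccontr)
    assume "\<not> ?thesis"
    then have "\<forall>D\<in>S. \<exists>c\<in>D. var c \<notin> P" by blast
    then obtain c where c: "\<And>D. D \<in> S \<Longrightarrow> c D \<in> D \<and> var (c D) \<notin> P" by metis
    define h where "h = (\<Prod>D\<in>S. (var (c D) :: ('v,'k) mpoly) ^ k)"
    have hQ: "h \<in> QQ D k" if "D \<in> S" for D
    proof -
      have "h = var (c D) ^ k * (\<Prod>D'\<in>S - {D}. (var (c D') :: ('v,'k) mpoly) ^ k)"
        unfolding h_def using that by (simp add: prod.remove)
      moreover have "var (c D) ^ k \<in> (QQ D k :: ('v,'k) mpoly set)" using c[OF that] by (simp add: var_pow_QQ)
      ultimately show ?thesis using QQ_mult[of "var (c D) ^ k" D k _ 0] by simp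
    qed
    have "h \<in> P" unfolding memP
    proof (intro allI impI)
      fix D assume dD: "dominating E D"
      show "h * f \<in> QQ D k"
      proof (cases "D \<in> S")
        case True then show ?thesis using QQ_mult[OF hQ[OF True], of f 0] by simp
      next
        case False
        then have "f \<in> QQ D k" using dD by (simp add: S_def)
        then show ?thesis using QQ_mult[of h D 0 f k] by simp
      qed
    qed
    then obtain D where "D \<in> S" "var (c D) ^ k \<in> P"
      using prime_prod[OF Pp, of S] unfolding h_def by auto
    then show False using prime_pow[OF Pp] c by blast
  qed
  then obtain D0 where D0S: "D0 \<in> S" and D0v: "\<forall>v\<in>D0. var v \<in> P" by blast
  have Q0P: "QQ D0 1 \<subseteq> P" using QQ1_sub[OF Pid] D0v by blast
  define Pd where "Pd D \<longleftrightarrow> D \<subseteq> D0 \<and> dominating E D" for D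
  have "Pd D0" using D0S by (simp add: Pd_def S_def)
  then obtain D1 where D1: "Pd D1" and D1min: "\<And>D. Pd D \<Longrightarrow> card D1 \<le> card D"
    using ex_has_least_nat[of Pd D0 card] by blast
  have D1sub: "D1 \<subseteq> D0" and D1dom: "dominating E D1" using D1 by (auto simp: Pd_def)
  have minimal: "D = D1" if "dominating E D" "D \<subseteq> D1" for D
  proof -
    have "Pd D" using that D1sub by (auto simp: Pd_def)
    then have "card D1 \<le> card D" by (rule D1min)
    moreover have "card D \<le> card D1" using that(2) by (rule card_mono[rotated]) simp
    ultimately have "card D = card D1" by simp
    then show ?thesis using card_subset_eq[of D1 D] that(2) by simp
  qed
  have "f \<notin> QQ D1 k" using D0S QQ_mono2[OF D1sub, of k] by (auto simp: S_def)
  then have D1S: "D1 \<in> S" using D1dom by (simp add: S_def)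
  have PD1: "P = QQ D1 1"
  proof
    show "P \<subseteq> QQ D1 1" using PsubQ[OF D1S] .
    show "QQ D1 1 \<subseteq> P" using QQ_mono2[OF D1sub, of 1] Q0P by (rule order_trans)
  qed
  define chi :: "'v \<Rightarrow>\<^sub>0 nat" where "chi = Abs_poly_mapping (\<lambda>v. if v \<in> D1 then 0 else 1)"
  have lchi: "lk chi v = (if v \<in> D1 then 0 else 1)" for v unfolding chi_def by simp
  define g :: "('v,'k) mpoly" where "g = mon chi"
  have gnot: "g \<notin> QQ D1 1"
  proof -
    have "deg D1 chi = 0" unfolding deg_def by (simp add: lchi)
    then show ?thesis by (simp add: g_def QQ_def)
  qed
  have gin: "g \<in> QQ D 1" if "v \<in> D" "v \<notin> D1" for D v
  proof -
    have "lk chi v \<le> deg D chi" unfolding deg_def using that(1) by (rule member_le_sum) simp_all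
    then have "1 \<le> deg D chi" using that(2) by (simp add: lchi)
    then show ?thesis by (simp add: g_def QQ_def)
  qed
  have "P = ideal_colon ?I g"
  proof
    show "P \<subseteq> ideal_colon ?I g"
    proof
      fix h assume "h \<in> P"
      then have hQ: "h \<in> QQ D1 1" using PD1 by simp
      have "h * g \<in> ?I" unfolding memI[OF assms]
      proof (intro allI impI)
        fix D assume dD: "dominating E D"
        show "h * g \<in> QQ D 1"
        proof (cases "D \<subseteq> D1")
          case True
          then have "D = D1" using minimal dD by blast
          then show ?thesis using QQ_mult[OF hQ, of g 0] by simp
        next
          case False
          then obtain v where "v \<in> D" "v \<notin> D1" by blast
          then show ?thesis using QQ_mult[of h D 0 g 1] gin by simp
        qed
      qed
      then show "h \<in> ideal_colon ?I g" by (simp add: ideal_colon_def)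
    qed
    show "ideal_colon ?I g \<subseteq> P"
    proof
      fix h assume "h \<in> ideal_colon ?I g"
      then have "h * g \<in> ?I" by (simp add: ideal_colon_def)
      then have "h * g \<in> QQ D1 1" using memI[OF assms] D1dom by blast
      then have "h \<in> QQ D1 1" using primary[OF gnot] by blast
      then show "h \<in> P" using PD1 by simp
    qed
  qed
  then show "P \<in> Ass ?I" using Pp unfolding Ass_def by blast
qed

end
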